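(* A tournament $G$ does not have a subtournament isomorphic to $D_4$ if and only if $G$ can be written as $T_n(I^1,\ldots,I^n)$ or as $I_2(T_n(I^1,\ldots,I^n), I)$, where $n \ge 1$ is odd, $I_2$ is taken with its standard ordering of vertices, and $I^1,\ldots,I^n,I$ are transitive tournaments.
   Context: A tournament is a finite, non-null, loopless directed graph in which for any two distinct vertices $u,v$ there is exactly one edge with both ends in $\{u,v\}$; write $u\to v$ for the edge from $u$ to $v$, and $X\Rightarrow Y$ if $x\to y$ for all $x\in X,y\in Y$. A subtournament is the tournament induced on a nonempty vertex subset. A tournament is transitive if its vertices can be ordered $v_1,\dots,v_n$ with $v_i\to v_j$ whenever $i<j$ (the standard ordering); $I_n$ denotes the transitive tournament on $n$ vertices. Substitution: given a tournament $G$ with an ordering $v_1,\dots,v_n$ of its vertices and tournaments $H_1,\dots,H_n$, $G(H_1,\dots,H_n)$ is a tournament whose vertex set is a disjoint union $V_1\cup\dots\cup V_n$, with $V_i\Rightarrow V_j$ whenever $v_i\to v_j$ and the subtournament on $V_i$ isomorphic to $H_i$. For $n=2k+1$, $T_n$ is the tournament on $v_1,\dots,v_n$ (ordered in this way for substitution) with $v_i\to v_j$ iff $j\equiv i+1,\dots,i+k \pmod n$. $D_4$ is the 4-vertex tournament consisting of a cyclic triangle $C$ and a vertex $v$ with $v\to c$ for every vertex $c$ of $C$. *)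

theory Defs
  imports Main
begin

text \<open>A tournament is given by a vertex set V and an edge relation E
  (E u v means u \<rightarrow> v); only the values of E on V matter.\<close>
definition tournament :: "'a set \<Rightarrow> ('a \<Rightarrow> 'a \<Rightarrow> bool) \<Rightarrow> bool" where
  "tournament V E \<longleftrightarrow> finite V \<and> V \<noteq> {} \<and> (\<forall>u\<in>V. \<not> E u u) \<and>
     (\<forall>u\<in>V. \<forall>v\<in>V. u \<noteq> v \<longrightarrow> (E u v \<longleftrightarrow> \<not> E v u))"

definition tourn_iso :: "'a set \<Rightarrow> ('a \<Rightarrow> 'a \<Rightarrow> bool) \<Rightarrow> 'b set \<Rightarrow> ('b \<Rightarrow> 'b \<Rightarrow> bool) \<Rightarrow> bool" where
  "tourn_iso V E W F \<longleftrightarrow> (\<exists>f. bij_betw f V W \<and> (\<forall>u\<in>V. \<forall>v\<in>V. E u v \<longleftrightarrow> F (f u) (f v)))"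

definition transitive_tournament :: "'a set \<Rightarrow> ('a \<Rightarrow> 'a \<Rightarrow> bool) \<Rightarrow> bool" where
  "transitive_tournament V E \<longleftrightarrow>
     (\<exists>f. bij_betw f {..<card V} V \<and> (\<forall>i j. i < j \<and> j < card V \<longrightarrow> E (f i) (f j)))"

definition D4_V :: "nat set" where "D4_V = {0,1,2,3}"
definition D4_E :: "nat \<Rightarrow> nat \<Rightarrow> bool" where
  "D4_E u v \<longleftrightarrow> (u,v) \<in> {(0,1),(1,2),(2,0),(3,0),(3,1),(3,2)}"

definition has_D4 :: "'a set \<Rightarrow> ('a \<Rightarrow> 'a \<Rightarrow> bool) \<Rightarrow> bool" where
  "has_D4 V E \<longleftrightarrow> (\<exists>S. S \<subseteq> V \<and> tourn_iso S E D4_V D4_E)"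

definition T_edge :: "nat \<Rightarrow> nat \<Rightarrow> nat \<Rightarrow> bool" where
  "T_edge n i j \<longleftrightarrow> (j + n - i) mod n \<in> {1..n div 2}"

text \<open>(V,E) can be written as G(H_0,...,H_{n-1}) where G has vertices 0..n-1 and edge
  relation GE, and P i S says that the subtournament on the part S is of the
  required shape for H_i.\<close>
definition subst_form :: "'a set \<Rightarrow> ('a \<Rightarrow> 'a \<Rightarrow> bool) \<Rightarrow> nat \<Rightarrow> (nat \<Rightarrow> nat \<Rightarrow> bool)
    \<Rightarrow> (nat \<Rightarrow> 'a set \<Rightarrow> bool) \<Rightarrow> bool" where
  "subst_form V E n GE P \<longleftrightarrow> (\<exists>part :: nat \<Rightarrow> 'a set.
     (\<forall>i<n. part i \<noteq> {} \<and> part i \<subseteq> V) \<and>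
     V = (\<Union>i<n. part i) \<and>
     (\<forall>i<n. \<forall>j<n. i \<noteq> j \<longrightarrow> part i \<inter> part j = {}) \<and>
     (\<forall>i<n. \<forall>j<n. GE i j \<longrightarrow> (\<forall>x\<in>part i. \<forall>y\<in>part j. E x y)) \<and>
     (\<forall>i<n. P i (part i)))"

definition T_of_transitive :: "'a set \<Rightarrow> ('a \<Rightarrow> 'a \<Rightarrow> bool) \<Rightarrow> nat \<Rightarrow> bool" where
  "T_of_transitive V E n \<longleftrightarrow> subst_form V E n (T_edge n) (\<lambda>i S. transitive_tournament S E)"

end

theory Submission
  imports Defs
begin
lemma tour_irrefl: "tournament V E \<Longrightarrow> x \<in> V \<Longrightarrow> \<not> E x x"
  by (simp add: tournament_def)
lemma tour_anti: "tournament V E \<Longrightarrow> x \<in> V \<Longrightarrow> y \<in> V \<Longrightarrow> E x y \<Longrightarrow> \<not> E y x"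
  unfolding tournament_def by metis
lemma tour_total: "tournament V E \<Longrightarrow> x \<in> V \<Longrightarrow> y \<in> V \<Longrightarrow> x \<noteq> y \<Longrightarrow> \<not> E x y \<Longrightarrow> E y x"
  unfolding tournament_def by metis
lemma tour_fin: "tournament V E \<Longrightarrow> finite V" by (simp add: tournament_def)
lemma tour_sub: "tournament V E \<Longrightarrow> S \<subseteq> V \<Longrightarrow> S \<noteq> {} \<Longrightarrow> tournament S E"
  unfolding tournament_def by (auto intro: finite_subset)

definition etrans :: "'a set \<Rightarrow> ('a \<Rightarrow> 'a \<Rightarrow> bool) \<Rightarrow> bool" where
  "etrans S E \<longleftrightarrow> (\<forall>x\<in>S. \<forall>y\<in>S. \<forall>z\<in>S. E x y \<longrightarrow> E y z \<longrightarrow> E x z)"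

lemma TT1:
  assumes T: "tournament V E" and S: "S \<subseteq> V" and tt: "transitive_tournament S E"
  shows "etrans S E"
proof -
  obtain f where bf: "bij_betw f {..<card S} S" and ord: "\<And>i j. i < j \<Longrightarrow> j < card S \<Longrightarrow> E (f i) (f j)"
    using tt unfolding transitive_tournament_def by blast
  have im: "f ` {..<card S} = S" using bf by (simp add: bij_betw_def)
  have key: "i < j" if "i < card S" "j < card S" "E (f i) (f j)" for i j
  proof (rule ccontr)
    assume "\<not> i < j"
    then consider "i = j" | "j < i" by linarith
    then show False
    proof cases
      case 1 then show ?thesis using that tour_irrefl[OF T, of "f i"] im S by auto
    next
      case 2 then have "E (f j) (f i)" using ord that by blast
      then show ?thesis using that tour_anti[OF T, of "f i" "f j"] im S by auto
    qed
  qed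
  show ?thesis unfolding etrans_def
  proof (intro ballI impI)
    fix x y z assume xyz: "x \<in> S" "y \<in> S" "z \<in> S" "E x y" "E y z"
    obtain i where i: "i < card S" "x = f i" using xyz(1) im by force
    obtain j where j: "j < card S" "y = f j" using xyz(2) im by force
    obtain l where l: "l < card S" "z = f l" using xyz(3) im by force
    have "i < j" using key i j xyz by blast
    moreover have "j < l" using key j l xyz by blast
    ultimately show "E x z" using ord i l by auto
  qed
qed

lemma sink_exists:
  assumes T: "tournament V E" and S: "S \<subseteq> V" "S \<noteq> {}" and tr: "etrans S E"
  shows "\<exists>z\<in>S. \<forall>w\<in>S. w \<noteq> z \<longrightarrow> E w z"
proof -
  have fin: "finite S" using T S tour_fin finite_subset by blast
  define h where "h x = card {w\<in>S. E x w}" for x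
  define M where "M = Min (h ` S)"
  have "M \<in> h ` S" unfolding M_def using fin S by (intro Min_in) auto
  then obtain z where z: "z \<in> S" "h z = M" by auto
  have zmin: "h z \<le> h w" if "w \<in> S" for w using that z fin unfolding M_def by auto
  show ?thesis
  proof (intro bexI[OF _ z(1)] ballI impI)
    fix w assume w: "w \<in> S" "w \<noteq> z"
    show "E w z"
    proof (rule ccontr)
      assume "\<not> E w z"
      then have ezw: "E z w" using tour_total[OF T, of w z] w z S by auto
      have sub: "{y\<in>S. E w y} \<subset> {y\<in>S. E z y}"
      proof
        show "{y\<in>S. E w y} \<subseteq> {y\<in>S. E z y}" using tr ezw w z unfolding etrans_def by blast
        show "{y\<in>S. E w y} \<noteq> {y\<in>S. E z y}" using ezw w tour_irrefl[OF T, of w] S by blast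
      qed
      have "h w < h z" unfolding h_def by (rule psubset_card_mono) (use fin sub in auto)
      with zmin[OF w(1)] show False by simp
    qed
  qed
qed

lemma TT2:
  assumes T: "tournament V E" and S: "S \<subseteq> V" and tr: "etrans S E"
  shows "transitive_tournament S E"
  using S tr
proof (induction "card S" arbitrary: S rule: less_induct)
  case less
  show ?case
  proof (cases "S = {}")
    case True then show ?thesis unfolding transitive_tournament_def by (auto simp: bij_betw_def)
  next
    case False
    have fin: "finite S" using T less.prems tour_fin finite_subset by blast
    obtain z where z: "z \<in> S" "\<And>w. w \<in> S \<Longrightarrow> w \<noteq> z \<Longrightarrow> E w z"
      using sink_exists[OF T less.prems(1) False less.prems(2)] by blast
    let ?W = "S - {z}"
    have cW: "card ?W = card S - 1" using z fin by simp
    have "card ?W < card S" using z fin by (simp add: card_gt_0_iff False)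
    moreover have "etrans ?W E" using less.prems(2) unfolding etrans_def by blast
    moreover have "?W \<subseteq> V" using less.prems by blast
    ultimately have "transitive_tournament ?W E" using less.hyps[of ?W] by blast
    then obtain f where bf: "bij_betw f {..<card ?W} ?W" and ord: "\<And>i j. i < j \<Longrightarrow> j < card ?W \<Longrightarrow> E (f i) (f j)"
      unfolding transitive_tournament_def by blast
    define g where "g i = (if i < card ?W then f i else z)" for i
    have "card S > 0" using fin False by (simp add: card_gt_0_iff)
    then have cS: "card S = Suc (card ?W)" using cW by simp
    have "g ` {..<card S} = insert z (f ` {..<card ?W})"
    proof -
      have "{..<card S} = insert (card ?W) {..<card ?W}" using cS by auto
      then show ?thesis unfolding g_def by auto
    qed
    also have "\<dots> = S" using bf z by (auto simp: bij_betw_def)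
    finally have im: "g ` {..<card S} = S" .
    have "inj_on g {..<card S}" by (rule eq_card_imp_inj_on) (auto simp: im)
    then have "bij_betw g {..<card S} S" using im by (simp add: bij_betw_def)
    moreover have "E (g i) (g j)" if "i < j" "j < card S" for i j
    proof (cases "j < card ?W")
      case True then show ?thesis using ord that unfolding g_def by auto
    next
      case False
      then have "g j = z" "i < card ?W" using that cS unfolding g_def by auto
      moreover have "f i \<in> ?W" using bf \<open>i < card ?W\<close> by (auto simp: bij_betw_def)
      ultimately show ?thesis using z unfolding g_def by auto
    qed
    ultimately show ?thesis unfolding transitive_tournament_def by blast
  qed
qed

definition quadfree :: "'a set \<Rightarrow> ('a \<Rightarrow> 'a \<Rightarrow> bool) \<Rightarrow> bool" where
  "quadfree V E \<longleftrightarrow> \<not>(\<exists>v\<in>V. \<exists>x\<in>V. \<exists>y\<in>V. \<exists>z\<in>V. E v x \<and> E v y \<and> E v z \<and> E x y \<and> E y z \<and> E z x)"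

lemma has_D4_iff:
  assumes T: "tournament V E"
  shows "has_D4 V E \<longleftrightarrow> \<not> quadfree V E"
proof
  assume "has_D4 V E"
  then obtain S f where S: "S \<subseteq> V" and bf: "bij_betw f S D4_V" and iso: "\<And>u w. u \<in> S \<Longrightarrow> w \<in> S \<Longrightarrow> E u w \<longleftrightarrow> D4_E (f u) (f w)"
    unfolding has_D4_def tourn_iso_def by blast
  define g where "g = inv_into S f"
  have g: "g a \<in> S \<and> f (g a) = a" if "a \<in> D4_V" for a
    unfolding g_def using bf that bij_betw_inv_into_right[OF bf] bij_betw_apply[OF bij_betw_inv_into[OF bf]] by blast
  have D: "0 \<in> D4_V" "1 \<in> D4_V" "2 \<in> D4_V" "3 \<in> D4_V" by (auto simp: D4_V_def)
  have "E (g 3) (g 0) \<and> E (g 3) (g 1) \<and> E (g 3) (g 2) \<and> E (g 0) (g 1) \<and> E (g 1) (g 2) \<and> E (g 2) (g 0)"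
    using iso g D by (auto simp: D4_E_def)
  then show "\<not> quadfree V E" unfolding quadfree_def using g D S by blast
next
  assume "\<not> quadfree V E"
  then obtain v x y z where in4: "v \<in> V" "x \<in> V" "y \<in> V" "z \<in> V" and
    e: "E v x" "E v y" "E v z" "E x y" "E y z" "E z x"
    unfolding quadfree_def by blast
  have ne: "\<not> E x v" "\<not> E y v" "\<not> E z v" "\<not> E y x" "\<not> E z y" "\<not> E x z"
    using e in4 tour_anti[OF T] by blast+
  have ir: "\<not> E v v" "\<not> E x x" "\<not> E y y" "\<not> E z z" using in4 tour_irrefl[OF T] by blast+
  have d: "v \<noteq> x" "v \<noteq> y" "v \<noteq> z" "x \<noteq> y" "y \<noteq> z" "x \<noteq> z" using e ir by auto
  define f where "f w = (if w = x then 0 else if w = y then 1 else if w = z then 2 else (3::nat))" for w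
  let ?S = "{v, x, y, z}"
  have fv: "f v = 3" "f x = 0" "f y = 1" "f z = 2" using d unfolding f_def by auto
  have "f ` ?S = D4_V" using fv unfolding D4_V_def by (simp add: insert_commute)
  moreover have "inj_on f ?S" using fv d unfolding inj_on_def by auto
  moreover have "\<forall>u\<in>?S. \<forall>w\<in>?S. E u w \<longleftrightarrow> D4_E (f u) (f w)"
  proof -
    have tab: "D4_E 3 0" "D4_E 3 1" "D4_E 3 2" "D4_E 0 1" "D4_E 1 2" "D4_E 2 0"
      "\<not> D4_E 0 3" "\<not> D4_E 1 3" "\<not> D4_E 2 3" "\<not> D4_E 1 0" "\<not> D4_E 2 1" "\<not> D4_E 0 2"
      "\<not> D4_E 0 0" "\<not> D4_E 1 1" "\<not> D4_E 2 2" "\<not> D4_E 3 3"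
      by (simp_all add: D4_E_def)
    show ?thesis unfolding ball_simps(7,5)
      by (simp only: fv tab e ne ir simp_thms)
  qed
  ultimately have "tourn_iso ?S E D4_V D4_E" unfolding tourn_iso_def bij_betw_def
    by (intro exI[of _ f]) simp
  moreover have "?S \<subseteq> V" using in4 by simp
  ultimately show "has_D4 V E" unfolding has_D4_def by (intro exI[of _ ?S]) simp
qed

lemma modsub: "(x::nat) < n \<Longrightarrow> y < n \<Longrightarrow> (y + n - x) mod n = (if x \<le> y then y - x else y + n - x)"
proof (cases "x \<le> y")
  case True
  assume "x < n" "y < n"
  have e: "y + n - x = (y - x) + n" using True by simp
  have "(y + n - x) mod n = ((y - x) + n) mod n" by (simp only: e)
  also have "\<dots> = y - x" using \<open>y<n\<close> by simp
  finally show ?thesis using True by simp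
next
  case False
  assume "x < n" "y < n"
  then show ?thesis using False by simp
qed

lemma arith_key:
  fixes n k a b i :: nat
  assumes "n = 2*k+1" "a<n" "b<n" "i<n" "(a + n - i) mod n \<le> k" "(b+n-i) mod n \<le> k"
    "(b + n - a) mod n \<in> {1..k}"
  shows "(a+n-i) mod n < (b+n-i) mod n"
proof -
  have h1: "(a+n-i) mod n = (if i \<le> a then a-i else a+n-i)" using assms by (intro modsub)
  have h2: "(b+n-i) mod n = (if i \<le> b then b-i else b+n-i)" using assms by (intro modsub)
  have h3: "(b+n-a) mod n = (if a \<le> b then b-a else b+n-a)" using assms by (intro modsub)
  have A5: "(if i \<le> a then a-i else a+n-i) \<le> k" using assms(5) h1 by simp
  have A6: "(if i \<le> b then b-i else b+n-i) \<le> k" using assms(6) h2 by simp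
  have A7: "1 \<le> (if a \<le> b then b-a else b+n-a) \<and> (if a \<le> b then b-a else b+n-a) \<le> k" using assms(7) h3 by simp
  show ?thesis unfolding h1 h2
    using A5 A6 A7 assms(1-4) by (cases "i \<le> a"; cases "i \<le> b"; cases "a \<le> b"; simp only: if_True if_False; linarith)
qed

lemma T_excl:
  assumes "odd n" "i < n" "j < n" "i \<noteq> j"
  shows "T_edge n i j \<or> T_edge n j i"
proof -
  define k where "k = n div 2"
  have n: "n = 2*k+1" using assms(1) unfolding k_def by simp
  have h1: "(j+n-i) mod n = (if i \<le> j then j-i else j+n-i)" using assms by (intro modsub)
  have h2: "(i+n-j) mod n = (if j \<le> i then i-j else i+n-j)" using assms by (intro modsub)
  show ?thesis unfolding T_edge_def h1 h2 k_def[symmetric] atLeastAtMost_iff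
    using n assms(2-4) by (cases "i \<le> j"; cases "j \<le> i"; simp only: if_True if_False; linarith)
qed

lemma subst_formE:
  assumes "subst_form V E n GE P"
  obtains part :: "nat \<Rightarrow> 'a set" where "\<And>i. i<n \<Longrightarrow> part i \<noteq> {} \<and> part i \<subseteq> V"
    and "V = (\<Union>i<n. part i)"
    and "\<And>i j. i<n \<Longrightarrow> j<n \<Longrightarrow> i \<noteq> j \<Longrightarrow> part i \<inter> part j = {}"
    and "\<And>i j x y. i<n \<Longrightarrow> j<n \<Longrightarrow> GE i j \<Longrightarrow> x\<in>part i \<Longrightarrow> y\<in>part j \<Longrightarrow> E x y"
    and "\<And>i. i<n \<Longrightarrow> P i (part i)"
proof -
  from assms obtain part :: "nat \<Rightarrow> 'a set" where h: "(\<forall>i<n. part i \<noteq> {} \<and> part i \<subseteq> V) \<and>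
     V = (\<Union>i<n. part i) \<and>
     (\<forall>i<n. \<forall>j<n. i \<noteq> j \<longrightarrow> part i \<inter> part j = {}) \<and>
     (\<forall>i<n. \<forall>j<n. GE i j \<longrightarrow> (\<forall>x\<in>part i. \<forall>y\<in>part j. E x y)) \<and>
     (\<forall>i<n. P i (part i))" unfolding subst_form_def ..
  note h1 = h[THEN conjunct1]
  note h2 = h[THEN conjunct2, THEN conjunct1]
  note h3 = h[THEN conjunct2, THEN conjunct2, THEN conjunct1]
  note h4 = h[THEN conjunct2, THEN conjunct2, THEN conjunct2, THEN conjunct1]
  note h5 = h[THEN conjunct2, THEN conjunct2, THEN conjunct2, THEN conjunct2]
  show ?thesis
  proof (rule that)
    show "\<And>i. i<n \<Longrightarrow> part i \<noteq> {} \<and> part i \<subseteq> V" using h1 by blast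
    show "V = (\<Union>i<n. part i)" by (rule h2)
    show "\<And>i j. i<n \<Longrightarrow> j<n \<Longrightarrow> i \<noteq> j \<Longrightarrow> part i \<inter> part j = {}" using h3 by blast
    show "\<And>i j x y. i<n \<Longrightarrow> j<n \<Longrightarrow> GE i j \<Longrightarrow> x\<in>part i \<Longrightarrow> y\<in>part j \<Longrightarrow> E x y" using h4 by blast
    show "\<And>i. i<n \<Longrightarrow> P i (part i)" using h5 by blast
  qed
qed

lemma T_quadfree:
  assumes T: "tournament V E" and od: "odd n" and F: "T_of_transitive V E n"
  shows "quadfree V E"
proof -
  obtain part where ne: "\<And>i. i<n \<Longrightarrow> part i \<noteq> {} \<and> part i \<subseteq> V"
    and un: "V = (\<Union>i<n. part i)"
    and dj: "\<And>i j. i<n \<Longrightarrow> j<n \<Longrightarrow> i \<noteq> j \<Longrightarrow> part i \<inter> part j = {}"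
    and ed: "\<And>i j x y. i<n \<Longrightarrow> j<n \<Longrightarrow> T_edge n i j \<Longrightarrow> x\<in>part i \<Longrightarrow> y\<in>part j \<Longrightarrow> E x y"
    and tt: "\<And>i. i<n \<Longrightarrow> transitive_tournament (part i) E"
  proof -
    from F have "\<exists>part. (\<forall>i<n. part i \<noteq> {} \<and> part i \<subseteq> V) \<and>
     V = (\<Union>i<n. part i) \<and>
     (\<forall>i<n. \<forall>j<n. i \<noteq> j \<longrightarrow> part i \<inter> part j = {}) \<and>
     (\<forall>i<n. \<forall>j<n. T_edge n i j \<longrightarrow> (\<forall>x\<in>part i. \<forall>y\<in>part j. E x y)) \<and>
     (\<forall>i<n. transitive_tournament (part i) E)" unfolding T_of_transitive_def subst_form_def .
    then obtain part where h: "(\<forall>i<n. part i \<noteq> {} \<and> part i \<subseteq> V) \<and>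
     V = (\<Union>i<n. part i) \<and>
     (\<forall>i<n. \<forall>j<n. i \<noteq> j \<longrightarrow> part i \<inter> part j = {}) \<and>
     (\<forall>i<n. \<forall>j<n. T_edge n i j \<longrightarrow> (\<forall>x\<in>part i. \<forall>y\<in>part j. E x y)) \<and>
     (\<forall>i<n. transitive_tournament (part i) E)" ..
    note h1 = h[THEN conjunct1]
    note h2 = h[THEN conjunct2, THEN conjunct1]
    note h3 = h[THEN conjunct2, THEN conjunct2, THEN conjunct1]
    note h4 = h[THEN conjunct2, THEN conjunct2, THEN conjunct2, THEN conjunct1]
    note h5 = h[THEN conjunct2, THEN conjunct2, THEN conjunct2, THEN conjunct2]
    show ?thesis
    proof (rule that)
      show "\<And>i. i<n \<Longrightarrow> part i \<noteq> {} \<and> part i \<subseteq> V" using h1 by blast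
      show "V = (\<Union>i<n. part i)" by (rule h2)
      show "\<And>i j. i<n \<Longrightarrow> j<n \<Longrightarrow> i \<noteq> j \<Longrightarrow> part i \<inter> part j = {}" using h3 by blast
      show "\<And>i j x y. i<n \<Longrightarrow> j<n \<Longrightarrow> T_edge n i j \<Longrightarrow> x\<in>part i \<Longrightarrow> y\<in>part j \<Longrightarrow> E x y" using h4 by blast
      show "\<And>i. i<n \<Longrightarrow> transitive_tournament (part i) E" using h5 by blast
    qed
  qed
  define p where "p w = (SOME i. i < n \<and> w \<in> part i)" for w
  have p: "p w < n \<and> w \<in> part (p w)" if "w \<in> V" for w
  proof -
    have "\<exists>i. i < n \<and> w \<in> part i" using that un by auto
    then show ?thesis unfolding p_def by (rule someI_ex)
  qed
  have puniq: "p w = i" if "w \<in> part i" "i < n" for w i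
  proof -
    have "w \<in> V" using that ne by auto
    then show ?thesis using p[of w] dj[of i "p w"] that by blast
  qed
  define k where "k = n div 2"
  have nk: "n = 2*k+1" using od unfolding k_def by simp
  have trp: "etrans (part i) E" if "i < n" for i using TT1[OF T] ne tt that by blast
  have edge: "T_edge n (p a) (p b)" if "a \<in> V" "b \<in> V" "E a b" "p a \<noteq> p b" for a b
  proof -
    have "\<not> T_edge n (p b) (p a)"
    proof
      assume "T_edge n (p b) (p a)"
      then have "E b a" using ed p that by blast
      then show False using tour_anti[OF T] that by blast
    qed
    then show ?thesis using T_excl[OF od] p that by blast
  qed
  show ?thesis unfolding quadfree_def
  proof
    assume "\<exists>v\<in>V. \<exists>x\<in>V. \<exists>y\<in>V. \<exists>z\<in>V. E v x \<and> E v y \<and> E v z \<and> E x y \<and> E y z \<and> E z x"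
    then obtain v x y z where in4: "v \<in> V" "x \<in> V" "y \<in> V" "z \<in> V" and
      e: "E v x" "E v y" "E v z" "E x y" "E y z" "E z x" by blast
    define o' where "o' w = (p w + n - p v) mod n" for w
    have c1: "o' w \<le> k" if "w \<in> V" "E v w" for w
    proof (cases "p w = p v")
      case True then show ?thesis unfolding o'_def by simp
    next
      case False
      then have "T_edge n (p v) (p w)" using edge[of v w] in4(1) that by auto
      then show ?thesis unfolding o'_def T_edge_def k_def by simp
    qed
    have c2: "o' a \<le> o' b \<and> (p a \<noteq> p b \<longrightarrow> o' a < o' b)"
      if "a \<in> V" "b \<in> V" "E v a" "E v b" "E a b" for a b
    proof (cases "p a = p b")
      case True then show ?thesis unfolding o'_def by simp
    next
      case False
      then have "T_edge n (p a) (p b)" using edge[of a b] that by blast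
      then have "(p b + n - p a) mod n \<in> {1..k}" unfolding T_edge_def k_def by simp
      then have "o' a < o' b" unfolding o'_def
        using arith_key[OF nk, of "p a" "p b" "p v"] c1[of a] c1[of b] that p in4
        unfolding o'_def by blast
      then show ?thesis using False by simp
    qed
    have xy: "o' x \<le> o' y \<and> (p x \<noteq> p y \<longrightarrow> o' x < o' y)" using c2[of x y] in4 e by blast
    have yz: "o' y \<le> o' z \<and> (p y \<noteq> p z \<longrightarrow> o' y < o' z)" using c2[of y z] in4 e by blast
    have zx: "o' z \<le> o' x \<and> (p z \<noteq> p x \<longrightarrow> o' z < o' x)" using c2[of z x] in4 e by blast
    have "p x = p y" "p y = p z" using xy yz zx by linarith+
    then have "x \<in> part (p x)" "y \<in> part (p x)" "z \<in> part (p x)" "p x < n"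
      using p[of x] p[of y] p[of z] in4 by metis+
    then have "E x z" using trp e unfolding etrans_def by blast
    then show False using e tour_anti[OF T] in4 by blast
  qed
qed

lemma F2_quadfree:
  assumes T: "tournament V E" and od: "odd n"
    and F: "subst_form V E 2 (\<lambda>i j. i < j) (\<lambda>i S. if i = 0 then T_of_transitive S E n else transitive_tournament S E)"
  shows "quadfree V E"
proof -
  obtain part :: "nat \<Rightarrow> 'a set" where ne: "\<And>i. i<2 \<Longrightarrow> part i \<noteq> {} \<and> part i \<subseteq> V"
    and un: "V = (\<Union>i<2. part i)"
    and dj: "\<And>i j. i<2 \<Longrightarrow> j<2 \<Longrightarrow> i \<noteq> j \<Longrightarrow> part i \<inter> part j = {}"
    and ed0: "\<And>i j x y. i<2 \<Longrightarrow> j<2 \<Longrightarrow> i < j \<Longrightarrow> x\<in>part i \<Longrightarrow> y\<in>part j \<Longrightarrow> E x y"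
    and P: "\<And>i. i<2 \<Longrightarrow> (if i = 0 then T_of_transitive (part i) E n else transitive_tournament (part i) E)"
    by (rule subst_formE[OF F]) blast
  have ed: "\<And>x y. x\<in>part 0 \<Longrightarrow> y\<in>part 1 \<Longrightarrow> E x y" using ed0[of 0 1] by simp
  have V: "V = part 0 \<union> part 1" using un by (auto simp: lessThan_def less_2_cases_iff)
  have T0: "tournament (part 0) E" using ne[of 0] tour_sub[OF T] by auto
  have q0: "quadfree (part 0) E" using T_quadfree[OF T0 od] P[of 0] by simp
  have tr1: "etrans (part 1) E" using TT1[OF T, of "part 1"] ne[of 1] P[of 1] by simp
  have no10: "\<not> E b a" if "a \<in> part 0" "b \<in> part 1" for a b
  proof -
    have "a \<in> V" "b \<in> V" using ne[of 0] ne[of 1] that by auto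
    then show ?thesis using ed[OF that] tour_anti[OF T] by blast
  qed
  show ?thesis unfolding quadfree_def
  proof
    assume "\<exists>v\<in>V. \<exists>x\<in>V. \<exists>y\<in>V. \<exists>z\<in>V. E v x \<and> E v y \<and> E v z \<and> E x y \<and> E y z \<and> E z x"
    then obtain v x y z where in4: "v \<in> V" "x \<in> V" "y \<in> V" "z \<in> V" and
      e: "E v x" "E v y" "E v z" "E x y" "E y z" "E z x" by blast
    have s1: "b \<in> part 1" if "a \<in> part 1" "b \<in> V" "E a b" for a b
    proof (rule ccontr)
      assume "b \<notin> part 1"
      then have "b \<in> part 0" using V that by blast
      then show False using no10[of b a] that by blast
    qed
    have same: "(x \<in> part 0 \<and> y \<in> part 0 \<and> z \<in> part 0) \<or> (x \<in> part 1 \<and> y \<in> part 1 \<and> z \<in> part 1)"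
    proof (cases "x \<in> part 1")
      case True
      then have "y \<in> part 1" using s1[of x y] in4 e by blast
      then have "z \<in> part 1" using s1[of y z] in4 e by blast
      then show ?thesis using True \<open>y \<in> part 1\<close> by blast
    next
      case False
      then have "z \<notin> part 1" using s1[of z x] in4 e by blast
      then have "y \<notin> part 1" using s1[of y z] in4 e by blast
      then show ?thesis using False \<open>z \<notin> part 1\<close> V in4 by blast
    qed
    then show False
    proof
      assume a: "x \<in> part 0 \<and> y \<in> part 0 \<and> z \<in> part 0"
      have "part 0 \<inter> part 1 = {}" using dj[of 0 1] by simp
      then have "v \<in> part 0" using s1[of v x] e in4 V a by blast
      then show False using q0 a e unfolding quadfree_def by blast
    next
      assume a: "x \<in> part 1 \<and> y \<in> part 1 \<and> z \<in> part 1"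
      then have "E x z" using tr1 e unfolding etrans_def by blast
      then show False using e tour_anti[OF T] in4 by blast
    qed
  qed
qed

lemma ord_idx:
  assumes T: "tournament V E" and S: "S \<subseteq> V" and bf: "bij_betw f {..<card S} S"
    and ord: "\<And>i j. i < j \<Longrightarrow> j < card S \<Longrightarrow> E (f i) (f j)"
    and ij: "i < card S" "j < card S" "E (f i) (f j)"
  shows "i < j"
proof (rule ccontr)
  have im: "f ` {..<card S} = S" using bf by (simp add: bij_betw_def)
  assume "\<not> i < j"
  then consider "i = j" | "j < i" by linarith
  then show False
  proof cases
    case 1 then show ?thesis using ij tour_irrefl[OF T, of "f i"] im S by auto
  next
    case 2 then have "E (f j) (f i)" using ord ij by blast
    then show ?thesis using ij tour_anti[OF T, of "f i" "f j"] im S by auto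
  qed
qed

locale C3 =
  fixes V :: "'a set" and E :: "'a \<Rightarrow> 'a \<Rightarrow> bool"
  assumes T: "tournament V E" and Q: "quadfree V E"
    and NS: "\<And>z. z \<in> V \<Longrightarrow> \<exists>w\<in>V. E z w"
    and NPM: "\<And>u v. u \<in> V \<Longrightarrow> v \<in> V \<Longrightarrow> E u v \<Longrightarrow> \<exists>w\<in>V. w \<noteq> u \<and> w \<noteq> v \<and> (E u w \<noteq> E v w)"
begin

lemma Qn: "\<lbrakk>v\<in>V; x\<in>V; y\<in>V; z\<in>V; E v x; E v y; E v z; E x y; E y z; E z x\<rbrakk> \<Longrightarrow> False"
  using Q unfolding quadfree_def by blast

lemma irr: "x \<in> V \<Longrightarrow> \<not> E x x" using tour_irrefl[OF T] .
lemma anti: "x \<in> V \<Longrightarrow> y \<in> V \<Longrightarrow> E x y \<Longrightarrow> \<not> E y x" using tour_anti[OF T] .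
lemma tot: "x \<in> V \<Longrightarrow> y \<in> V \<Longrightarrow> x \<noteq> y \<Longrightarrow> \<not> E x y \<Longrightarrow> E y x" using tour_total[OF T] .
lemma fin: "finite V" using tour_fin[OF T] .

lemma intrans:
  assumes in4: "a \<in> V" "b \<in> V" "c \<in> V" "v \<in> V" and e: "E a b" "E b c" "E c a" "E a v" "E b v" "E c v"
  shows False
proof -
  define D where "D = {w\<in>V. E a w \<and> E b w \<and> E c w}"
  have DV: "D \<subseteq> V" unfolding D_def by blast
  have "v \<in> D" unfolding D_def using in4 e by blast
  then have Dne: "D \<noteq> {}" by blast
  have trD: "etrans D E" unfolding etrans_def
  proof (intro ballI impI)
    fix x y z assume xyz: "x \<in> D" "y \<in> D" "z \<in> D" "E x y" "E y z"
    show "E x z"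
    proof (rule ccontr)
      assume nxz: "\<not> E x z"
      have V3: "x \<in> V" "y \<in> V" "z \<in> V" using xyz DV by blast+
      have "x \<noteq> z" using xyz V3 anti by blast
      then have "E z x" using tot V3 nxz by blast
      moreover have "E a x" "E a y" "E a z" using xyz unfolding D_def by blast+
      ultimately show False using Qn[of a x y z] in4 V3 xyz by blast
    qed
  qed
  obtain d0 where d0: "d0 \<in> D" "\<And>w. w \<in> D \<Longrightarrow> w \<noteq> d0 \<Longrightarrow> E w d0"
    using sink_exists[OF T DV Dne trD] by blast
  have d0V: "d0 \<in> V" and ed0: "E a d0" "E b d0" "E c d0" using d0 DV unfolding D_def by blast+
  obtain r where r: "r \<in> V" "E d0 r" using NS[OF d0V] by blast
  have rD: "r \<notin> D"
  proof
    assume "r \<in> D"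
    moreover have "r \<noteq> d0" using r irr by blast
    ultimately have "E r d0" using d0 by blast
    then show False using r anti d0V by blast
  qed
  have nin: "\<not> (E a r \<and> E b r \<and> E c r)" using rD r unfolding D_def by blast
  have nout: "\<not> (E r a \<and> E r b \<and> E r c)" using Qn[of r a b c] r in4 e by blast
  have ra: "r \<noteq> a" "r \<noteq> b" "r \<noteq> c" using ed0 r anti d0V in4 by blast+
  have t1: "E a r \<or> E r a" "E b r \<or> E r b" "E c r \<or> E r c" using tot ra r in4 by blast+
  have k1: "\<not> (E a r \<and> E r b)" using Qn[of a d0 r b] in4 r d0V ed0 e by blast
  have k2: "\<not> (E b r \<and> E r c)" using Qn[of b d0 r c] in4 r d0V ed0 e by blast
  have k3: "\<not> (E c r \<and> E r a)" using Qn[of c d0 r a] in4 r d0V ed0 e by blast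
  have a1: "\<not> (E a r \<and> E r a)" "\<not> (E b r \<and> E r b)" "\<not> (E c r \<and> E r c)" using anti r in4 by blast+
  show False using nin nout t1 k1 k2 k3 a1 by blast
qed

definition Out :: "'a \<Rightarrow> 'a set" where "Out v = {w\<in>V. E v w}"
definition d :: "'a \<Rightarrow> nat" where "d v = card (Out v)"
definition s :: "'a \<Rightarrow> 'a" where "s v = (SOME u. u \<in> Out v \<and> (\<forall>w\<in>Out v. w \<noteq> u \<longrightarrow> E u w))"

lemma OV: "Out v \<subseteq> V" unfolding Out_def by blast
lemma Ofin: "finite (Out v)" using fin OV finite_subset by blast

lemma trO: "v \<in> V \<Longrightarrow> etrans (Out v) E"
  unfolding etrans_def
proof (intro ballI impI)
  fix x y z assume v: "v \<in> V" and xyz: "x \<in> Out v" "y \<in> Out v" "z \<in> Out v" "E x y" "E y z"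
  show "E x z"
  proof (rule ccontr)
    assume nxz: "\<not> E x z"
    have V3: "x \<in> V" "y \<in> V" "z \<in> V" using xyz OV by blast+
    have "x \<noteq> z" using xyz V3 anti by blast
    then have "E z x" using tot V3 nxz by blast
    moreover have "E v x" "E v y" "E v z" using xyz unfolding Out_def by blast+
    ultimately show False using Qn[of v x y z] v V3 xyz by blast
  qed
qed

lemma ttO: "v \<in> V \<Longrightarrow> transitive_tournament (Out v) E"
  using TT2[OF T OV trO] .

lemma One: "v \<in> V \<Longrightarrow> Out v \<noteq> {}" using NS unfolding Out_def by blast

lemma dpos: "v \<in> V \<Longrightarrow> d v \<ge> 1"
  using One Ofin unfolding d_def by (simp add: Suc_le_eq card_gt_0_iff)

lemma s_prop: assumes v: "v \<in> V" shows "s v \<in> Out v \<and> (\<forall>w\<in>Out v. w \<noteq> s v \<longrightarrow> E (s v) w)"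
proof -
  obtain f where bf: "bij_betw f {..<card (Out v)} (Out v)" and ord: "\<And>i j. i < j \<Longrightarrow> j < card (Out v) \<Longrightarrow> E (f i) (f j)"
    using ttO[OF v] unfolding transitive_tournament_def by blast
  have im: "f ` {..<card (Out v)} = Out v" using bf by (simp add: bij_betw_def)
  have c0: "0 < card (Out v)" using dpos[OF v] unfolding d_def by simp
  have "f 0 \<in> Out v \<and> (\<forall>w\<in>Out v. w \<noteq> f 0 \<longrightarrow> E (f 0) w)"
  proof (intro conjI ballI impI)
    show "f 0 \<in> Out v" using im c0 by blast
    fix w assume "w \<in> Out v" "w \<noteq> f 0"
    then obtain j where "j < card (Out v)" "w = f j" using im by (metis imageE lessThan_iff)
    then show "E (f 0) w" using ord \<open>w \<noteq> f 0\<close> by (metis gr0I)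
  qed
  then show ?thesis unfolding s_def by (rule someI)
qed

lemma s_uniq: assumes v: "v \<in> V" and u: "u \<in> Out v" "\<forall>w\<in>Out v. w \<noteq> u \<longrightarrow> E u w" shows "u = s v"
proof (rule ccontr)
  assume ne: "u \<noteq> s v"
  have "E u (s v)" using u s_prop[OF v] ne[symmetric] by blast
  moreover have "E (s v) u" using u s_prop[OF v] ne by blast
  ultimately show False using anti u s_prop[OF v] OV by blast
qed

lemma sV: "v \<in> V \<Longrightarrow> s v \<in> V" using s_prop OV by blast
lemma spowV: "v \<in> V \<Longrightarrow> (s^^t) v \<in> V" by (induction t) (auto simp: sV)

lemma chain:
  assumes v: "v \<in> V" and bf: "bij_betw f {..<d v} (Out v)" and ord: "\<And>i j. i < j \<Longrightarrow> j < d v \<Longrightarrow> E (f i) (f j)"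
  shows "i < d v \<Longrightarrow> f i = (s^^Suc i) v"
proof (induction i)
  have im: "f ` {..<d v} = Out v" using bf by (simp add: bij_betw_def)
  {
    case 0
    have "f 0 \<in> Out v" using im 0 by blast
    moreover have "\<forall>w\<in>Out v. w \<noteq> f 0 \<longrightarrow> E (f 0) w"
    proof (intro ballI impI)
      fix w assume "w \<in> Out v" "w \<noteq> f 0"
      then obtain j where "j < d v" "w = f j" using im by (metis imageE lessThan_iff)
      then show "E (f 0) w" using ord \<open>w \<noteq> f 0\<close> by (metis gr0I)
    qed
    ultimately show ?case using s_uniq[OF v] by simp
  next
    case (Suc i)
    then have IH: "f i = (s^^Suc i) v" by simp
    have fi: "f i \<in> Out v" "f (Suc i) \<in> Out v" using im Suc.prems by auto
    have fiV: "f i \<in> V" "f (Suc i) \<in> V" using fi OV by blast+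
    have ev: "E v (f i)" "E v (f (Suc i))" using fi unfolding Out_def by blast+
    have e1: "E (f i) (f (Suc i))" using ord Suc.prems by simp
    have "f (Suc i) \<in> Out (f i)" using e1 fiV unfolding Out_def by blast
    moreover have "\<forall>w\<in>Out (f i). w \<noteq> f (Suc i) \<longrightarrow> E (f (Suc i)) w"
    proof (intro ballI impI)
      fix w assume w: "w \<in> Out (f i)" "w \<noteq> f (Suc i)"
      have wV: "w \<in> V" and ew: "E (f i) w" using w unfolding Out_def by blast+
      show "E (f (Suc i)) w"
      proof (rule ccontr)
        assume "\<not> E (f (Suc i)) w"
        then have ew2: "E w (f (Suc i))" using tot wV fiV w by blast
        show False
        proof (cases "w \<in> Out v")
          case True
          then obtain j where j: "j < d v" "w = f j" using im by (metis imageE lessThan_iff)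
          have bf': "bij_betw f {..<card (Out v)} (Out v)" using bf unfolding d_def .
          have ord': "\<And>i j. i<j \<Longrightarrow> j < card (Out v) \<Longrightarrow> E (f i) (f j)" using ord unfolding d_def .
          have "i < j" using ord_idx[OF T OV bf' ord', of i j] ew j Suc.prems unfolding d_def by auto
          moreover have "j < Suc i" using ord_idx[OF T OV bf' ord', of j "Suc i"] ew2 j Suc.prems unfolding d_def by auto
          ultimately show False by simp
        next
          case False
          have "w \<noteq> v" using ev(1) ew anti v fiV by blast
          then have "E w v" using False tot wV v unfolding Out_def by blast
          then show False using intrans[of v "f i" w "f (Suc i)"] v fiV wV ev e1 ew ew2 by blast
        qed
      qed
    qed
    ultimately have "f (Suc i) = s (f i)" using s_uniq fiV by blast
    then show ?case using IH by simp
  }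
qed

lemma Ochar: assumes v: "v \<in> V" shows "Out v = (\<lambda>i. (s^^Suc i) v) ` {..<d v}"
proof -
  obtain f where bf: "bij_betw f {..<card (Out v)} (Out v)" and ord: "\<And>i j. i < j \<Longrightarrow> j < card (Out v) \<Longrightarrow> E (f i) (f j)"
    using ttO[OF v] unfolding transitive_tournament_def by blast
  have im: "f ` {..<d v} = Out v" using bf unfolding d_def by (simp add: bij_betw_def)
  have "f i = (s^^Suc i) v" if "i < d v" for i
    using chain[OF v, of f i] bf ord that unfolding d_def by blast
  then show ?thesis using im by (metis (no_types, lifting) image_cong lessThan_iff)
qed

lemma powO: assumes v: "v \<in> V" "1 \<le> t" "t \<le> d v" shows "(s^^t) v \<in> Out v"
proof -
  have "t = Suc (t - 1)" "t - 1 < d v" using v by auto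
  then show ?thesis using Ochar[OF v(1)] by (metis image_eqI lessThan_iff)
qed

lemma s_inj: "inj_on s V"
proof (rule inj_onI)
  fix u v assume u: "u \<in> V" and v: "v \<in> V" and eq: "s u = s v"
  show "u = v"
  proof (rule ccontr)
    assume ne: "u \<noteq> v"
    have su: "E u (s u)" and sv: "E v (s v)" using s_prop[OF u] s_prop[OF v] unfolding Out_def by blast+
    have suV: "s u \<in> V" using sV u by blast
    have gen: False if a: "a \<in> V" "b \<in> V" "E a b" "s a = s b" for a b
    proof -
      have "E b (s b)" using s_prop[OF a(2)] unfolding Out_def by blast
      have bO: "b \<in> Out a" using a unfolding Out_def by blast
      have "b \<noteq> s a" using \<open>E b (s b)\<close> a irr by auto
      then have "E (s a) b" using s_prop[OF a(1)] bO by blast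
      then show False using \<open>E b (s b)\<close> a anti sV by metis
    qed
    show False
    proof (cases "E u v")
      case True then show ?thesis using gen[of u v] u v eq by blast
    next
      case False then have "E v u" using tot u v ne by blast
      then show ?thesis using gen[of v u] u v eq by metis
    qed
  qed
qed

lemma s_img: "s ` V = V"
proof -
  have "s ` V \<subseteq> V" using sV by blast
  moreover have "card (s ` V) = card V" using card_image[OF s_inj] .
  ultimately show ?thesis using fin by (simp add: card_subset_eq)
qed

lemma d_mono: assumes v: "v \<in> V" shows "d v \<le> d (s v)"
proof (rule ccontr)
  assume "\<not> d v \<le> d (s v)"
  then have lt: "d (s v) < d v" by simp
  have sub: "Out v - {s v} \<subseteq> Out (s v)" using s_prop[OF v] OV unfolding Out_def by blast
  have svO: "s v \<in> Out v" using s_prop[OF v] by blast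
  have c: "card (Out v - {s v}) = d v - 1" unfolding d_def using svO Ofin by simp
  have "card (Out (s v)) \<le> card (Out v - {s v})" using lt c unfolding d_def by simp
  then have eqs: "Out v - {s v} = Out (s v)" using card_seteq[OF Ofin sub] by blast
  have svV: "s v \<in> V" using sV v by blast
  have "E v (s v)" using svO unfolding Out_def by blast
  then obtain w where w: "w \<in> V" "w \<noteq> v" "w \<noteq> s v" "E v w \<noteq> E (s v) w" using NPM[OF v svV] by blast
  have "E v w \<longleftrightarrow> w \<in> Out v - {s v}" using w unfolding Out_def by blast
  also have "\<dots> \<longleftrightarrow> E (s v) w" using eqs w unfolding Out_def by blast
  finally show False using w by blast
qed

lemma d_eq: assumes v: "v \<in> V" shows "d (s v) = d v"
proof (rule ccontr)
  assume "d (s v) \<noteq> d v"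
  then have lt: "d v < (d \<circ> s) v" using d_mono[OF v] by simp
  have "sum d V = sum d (s ` V)" using s_img by simp
  also have "\<dots> = sum (d \<circ> s) V" using sum.reindex[OF s_inj] .
  finally have eq: "sum d V = sum (d \<circ> s) V" .
  have "sum d V < sum (d \<circ> s) V"
    using sum_strict_mono_ex1[OF fin, of d "d \<circ> s"] d_mono lt v by auto
  then show False using eq by simp
qed

lemma d_pow: "v \<in> V \<Longrightarrow> d ((s^^t) v) = d v"
proof (induction t)
  case 0 then show ?case by simp
next
  case (Suc t) then show ?case using d_eq[OF spowV[OF Suc.prems, of t]] by simp
qed

lemma d_const: assumes v: "v \<in> V" and w: "w \<in> V" shows "d w = d v"
proof -
  have gen: "d b = d a" if ab: "a \<in> V" "E a b" "b \<in> V" for a b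
  proof -
    have "b \<in> Out a" using ab unfolding Out_def by blast
    then obtain i where "b = (s^^Suc i) a" using Ochar[OF ab(1)] by blast
    then show ?thesis using d_pow[OF ab(1), of "Suc i"] by (simp del: funpow.simps)
  qed
  show ?thesis
  proof (cases "w = v")
    case True then show ?thesis by simp
  next
    case False
    then show ?thesis using gen[of v w] gen[of w v] tot v w by metis
  qed
qed

lemma pinv: "x \<in> V \<Longrightarrow> (inv_into V s ^^ t) ((s^^t) x) = x"
proof (induction t arbitrary: x)
  case 0 then show ?case by simp
next
  case (Suc t)
  have "(s^^Suc t) x = (s^^t) (s x)" by (simp add: funpow_swap1)
  moreover have "(inv_into V s ^^ t) ((s^^t) (s x)) = s x" using Suc.IH sV Suc.prems by blast
  ultimately show ?case using inv_into_f_f[OF s_inj Suc.prems] by simp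
qed

lemma pow_inj: "x \<in> V \<Longrightarrow> y \<in> V \<Longrightarrow> (s^^i) x = (s^^i) y \<Longrightarrow> x = y"
proof (induction i)
  case 0 then show ?case by simp
next
  case (Suc i)
  have "(s^^i) x = (s^^i) y"
    using Suc.prems s_inj spowV[of x i] spowV[of y i] by (simp add: inj_on_def)
  then show ?case using Suc by blast
qed

theorem main3: "\<exists>n. odd n \<and> T_of_transitive V E n"
proof -
  have "V \<noteq> {}" using T unfolding tournament_def by blast
  then obtain v0 where v0: "v0 \<in> V" by blast
  define k where "k = d v0"
  have dk: "d w = k" if "w \<in> V" for w using d_const[OF v0 that] unfolding k_def .
  have k1: "k \<ge> 1" using dpos[OF v0] unfolding k_def .
  have pE: "E w ((s^^t) w)" if "w \<in> V" "1 \<le> t" "t \<le> k" for w t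
    using powO[of w t] that dk unfolding Out_def by auto
  have noncyc: "(s^^t) w \<noteq> w" if w: "w \<in> V" "1 \<le> t" "t \<le> 2*k" for w t
  proof
    assume eq: "(s^^t) w = w"
    show False
    proof (cases "t \<le> k")
      case True then show ?thesis using pE[OF w(1,2)] eq irr w by auto
    next
      case False
      define u where "u = (s^^k) w"
      have uV: "u \<in> V" unfolding u_def using spowV w by blast
      have "E w u" unfolding u_def using pE[OF w(1) k1] by simp
      moreover have "(s^^(t-k)) u = (s^^(t-k+k)) w" unfolding u_def by (simp only: funpow_add comp_def)
      then have "(s^^(t-k)) u = (s^^t) w" using False by simp
      then have "E u w" using pE[OF uV, of "t-k"] False w eq by auto
      ultimately show False using anti w uV by blast
    qed
  qed
  define m where "m = 2*k+1"
  define g where "g i = (s^^i) v0" for i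
  have gV: "g i \<in> V" for i unfolding g_def using spowV v0 by blast
  have gshift: "(s^^t) (g i) = g (t + i)" for t i unfolding g_def by (simp add: funpow_add)
  have ginj: "inj_on g {..<m}"
  proof -
    have gen: "g i \<noteq> g j" if "i < j" "j < m" for i j
    proof
      assume "g i = g j"
      then have "(s^^(j-i)) (g i) = g i" using gshift[of "j-i" i] that by simp
      then show False using noncyc[OF gV, of "j-i" i] that unfolding m_def by auto
    qed
    show ?thesis unfolding inj_on_def using gen by (metis lessThan_iff linorder_cases)
  qed
  define Inn where "Inn = {w\<in>V. E w v0}"
  have Vsub: "V \<subseteq> insert v0 (Out v0 \<union> Inn)" unfolding Out_def Inn_def using tot v0 by blast
  have Inn_sub: "Inn \<subseteq> (\<lambda>t. (inv_into V s ^^ t) v0) ` {1..k}"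
  proof
    fix w assume w: "w \<in> Inn"
    then have wV: "w \<in> V" and "v0 \<in> Out w" unfolding Inn_def Out_def using v0 by blast+
    then obtain i where i: "i < d w" "v0 = (s^^Suc i) w" using Ochar[OF wV] by blast
    then have "(inv_into V s ^^ Suc i) v0 = w" using pinv[OF wV, of "Suc i"] by (simp del: funpow.simps)
    moreover have "Suc i \<in> {1..k}" using i dk[OF wV] by simp
    ultimately show "w \<in> (\<lambda>t. (inv_into V s ^^ t) v0) ` {1..k}" by force
  qed
  have cI: "card Inn \<le> k"
    using card_mono[OF _ Inn_sub] card_image_le[of "{1..k}" "\<lambda>t. (inv_into V s ^^ t) v0"] by simp
  have cO: "card (Out v0) = k" unfolding k_def d_def ..
  have finI: "finite Inn" unfolding Inn_def using fin by simp
  have "card V \<le> card (insert v0 (Out v0 \<union> Inn))" using card_mono[OF _ Vsub] Ofin finI by simp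
  also have "\<dots> \<le> Suc (card (Out v0 \<union> Inn))" by (simp add: card_insert_if Ofin finI)
  also have "\<dots> \<le> Suc (card (Out v0) + card Inn)" using card_Un_le by simp
  finally have cV: "card V \<le> m" using cO cI unfolding m_def by simp
  have gimV: "g ` {..<m} \<subseteq> V" using gV by blast
  have cg: "card (g ` {..<m}) = m" using card_image[OF ginj] by simp
  have gim: "g ` {..<m} = V" using card_subset_eq[OF fin gimV] cg cV card_mono[OF fin gimV] by simp
  have cVm: "card V = m" using gim cg by simp
  have per: "g m = v0"
  proof -
    have "g m \<in> V" by (rule gV)
    then obtain i where i: "i < m" "g m = g i" using gim by (metis imageE lessThan_iff)
    show ?thesis
    proof (cases "i = 0")
      case True then show ?thesis using i unfolding g_def by simp
    next
      case False
      have "(s^^i) (g (m - i)) = (s^^i) v0" using gshift[of i "m-i"] i unfolding g_def by simp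
      then have "g (m - i) = v0" using pow_inj gV v0 by blast
      then have "(s^^(m-i)) v0 = v0" unfolding g_def .
      moreover have "1 \<le> m - i" "m - i \<le> 2*k" using False i unfolding m_def by auto
      ultimately show ?thesis using noncyc[OF v0] by blast
    qed
  qed
  have edge: "E (g i) (g j)" if ij: "i < m" "j < m" "T_edge m i j" for i j
  proof -
    define t where "t = (j + m - i) mod m"
    have tr: "1 \<le> t" "t \<le> k" using ij unfolding T_edge_def t_def m_def by auto
    have teq: "t = (if i \<le> j then j - i else j + m - i)" unfolding t_def using modsub ij by blast
    have "(s^^t) (g i) = g j"
    proof (cases "i \<le> j")
      case True then show ?thesis using gshift[of t i] teq by simp
    next
      case False
      then have "t + i = j + m" using teq ij by simp
      then have "(s^^t) (g i) = g (j + m)" using gshift[of t i] by simp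
      also have "\<dots> = (s^^j) (g m)" using gshift[of j m] by simp
      also have "\<dots> = g j" using per unfolding g_def by simp
      finally show ?thesis .
    qed
    then show ?thesis using pE[OF gV[of i] tr] by simp
  qed
  have tt1: "transitive_tournament {x} E" for x
    unfolding transitive_tournament_def
    by (rule exI[of _ "\<lambda>_. x"]) (auto simp: bij_betw_def lessThan_Suc)
  have "T_of_transitive V E m"
    unfolding T_of_transitive_def subst_form_def
  proof (rule exI[of _ "\<lambda>i. {g i}"], intro conjI allI impI ballI)
    show "{g i} \<noteq> {}" for i by simp
    show "{g i} \<subseteq> V" for i using gV by simp
    show "V = (\<Union>i<m. {g i})" using gim by auto
    show "{g i} \<inter> {g j} = {}" if "i < m" "j < m" "i \<noteq> j" for i j
      using ginj that unfolding inj_on_def by auto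
    show "E x y" if "i < m" "j < m" "T_edge m i j" "x \<in> {g i}" "y \<in> {g j}" for i j x y
      using edge that by simp
    show "transitive_tournament {g i} E" for i by (rule tt1)
  qed
  moreover have "odd m" unfolding m_def by simp
  ultimately show ?thesis by blast
qed

end

lemma tt_insert_twin:
  assumes T: "tournament V E" and S: "S \<subseteq> V" "u \<in> S" "v \<in> V" "v \<notin> S" and uv: "E u v"
    and md: "\<And>w. w \<in> V \<Longrightarrow> w \<noteq> u \<Longrightarrow> w \<noteq> v \<Longrightarrow> (E u w \<longleftrightarrow> E v w)"
    and tt: "transitive_tournament S E"
  shows "transitive_tournament (insert v S) E"
proof -
  have trS: "etrans S E" using TT1[OF T S(1) tt] .
  have uV: "u \<in> V" using S by blast
  have md2: "E w u \<longleftrightarrow> E w v" if "w \<in> V" "w \<noteq> u" "w \<noteq> v" for w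
    using md[OF that] that tour_total[OF T] tour_anti[OF T] uV S(3) by metis
  have vu: "\<not> E v u" using tour_anti[OF T uV S(3) uv] .
  have irr: "\<And>x. x \<in> V \<Longrightarrow> \<not> E x x" using tour_irrefl[OF T] .
  have anti: "\<And>x y. x \<in> V \<Longrightarrow> y \<in> V \<Longrightarrow> E x y \<Longrightarrow> \<not> E y x" using tour_anti[OF T] .
  have "etrans (insert v S) E" unfolding etrans_def
  proof (intro ballI impI)
    fix x y z assume xyz: "x \<in> insert v S" "y \<in> insert v S" "z \<in> insert v S" "E x y" "E y z"
    have V3: "x \<in> V" "y \<in> V" "z \<in> V" using xyz S by auto
    show "E x z"
    proof (cases "x = v")
      case xv: True
      then have yv: "y \<noteq> v" using xyz irr V3 by blast
      have yu: "y \<noteq> u" using xv xyz vu by blast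
      have euy: "E u y" using md[OF V3(2) yu yv] xyz xv by simp
      have zv: "z \<noteq> v" using xv xyz anti V3 by blast
      have zu: "z \<noteq> u" using euy xyz anti V3 by blast
      have "E u z" using trS euy xyz S yv zv unfolding etrans_def by blast
      then show ?thesis using md[OF V3(3) zu zv] xv by simp
    next
      case xnv: False
      show ?thesis
      proof (cases "y = v")
        case yv: True
        have zv: "z \<noteq> v" using yv xyz irr V3 by blast
        have zu: "z \<noteq> u" using yv xyz vu by blast
        have euz: "E u z" using md[OF V3(3) zu zv] xyz yv by simp
        show ?thesis
        proof (cases "x = u")
          case True then show ?thesis using euz by simp
        next
          case False
          then have "E x u" using md2[OF V3(1) False xnv] xyz yv by simp
          then show ?thesis using trS euz xyz S xnv zv unfolding etrans_def by blast
        qed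
      next
        case ynv: False
        show ?thesis
        proof (cases "z = v")
          case zv: True
          show ?thesis
          proof (cases "y = u")
            case True
            then have xu: "x \<noteq> u" using xyz irr V3 by blast
            then show ?thesis using md2[OF V3(1) xu xnv] xyz True zv by simp
          next
            case False
            then have eyu: "E y u" using md2[OF V3(2) False ynv] xyz zv by simp
            have xu: "x \<noteq> u" using eyu xyz anti V3 by blast
            have "E x u" using trS eyu xyz S xnv ynv unfolding etrans_def by blast
            then show ?thesis using md2[OF V3(1) xu xnv] zv by simp
          qed
        next
          case False
          then show ?thesis using trS xyz xnv ynv unfolding etrans_def by blast
        qed
      qed
    qed
  qed
  moreover have "insert v S \<subseteq> V" using S by blast
  ultimately show ?thesis using TT2[OF T] by blast
qed

lemma subst_insert:
  assumes T: "tournament V E" and W: "W \<subseteq> V" "u \<in> W" "v \<in> V" "v \<notin> W" and uv: "E u v"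
    and md: "\<And>w. w \<in> V \<Longrightarrow> w \<noteq> u \<Longrightarrow> w \<noteq> v \<Longrightarrow> (E u w \<longleftrightarrow> E v w)"
    and noGE: "\<And>i. \<not> GE i i"
    and SF: "subst_form W E n GE P"
    and Pins: "\<And>i S. i < n \<Longrightarrow> P i S \<Longrightarrow> u \<in> S \<Longrightarrow> S \<subseteq> W \<Longrightarrow> P i (insert v S)"
  shows "subst_form (insert v W) E n GE P"
proof -
  obtain part :: "nat \<Rightarrow> 'a set" where ne: "\<And>i. i<n \<Longrightarrow> part i \<noteq> {} \<and> part i \<subseteq> W"
    and un: "W = (\<Union>i<n. part i)"
    and dj: "\<And>i j. i<n \<Longrightarrow> j<n \<Longrightarrow> i \<noteq> j \<Longrightarrow> part i \<inter> part j = {}"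
    and ed: "\<And>i j x y. i<n \<Longrightarrow> j<n \<Longrightarrow> GE i j \<Longrightarrow> x\<in>part i \<Longrightarrow> y\<in>part j \<Longrightarrow> E x y"
    and P: "\<And>i. i<n \<Longrightarrow> P i (part i)"
    by (rule subst_formE[OF SF]) blast
  have uV: "u \<in> V" using W by blast
  have md2: "E w u \<longleftrightarrow> E w v" if "w \<in> V" "w \<noteq> u" "w \<noteq> v" for w
    using md[OF that] that tour_total[OF T] tour_anti[OF T] uV W(3) by metis
  define part' where "part' i = (if u \<in> part i then insert v (part i) else part i)" for i
  show ?thesis unfolding subst_form_def
  proof (rule exI[of _ part'], intro conjI allI impI ballI)
    fix i assume i: "i < n"
    show "part' i \<noteq> {}" using ne[OF i] unfolding part'_def by auto
    show "part' i \<subseteq> insert v W" using ne[OF i] unfolding part'_def by auto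
    show "P i (part' i)" using P[OF i] Pins[OF i] ne[OF i] unfolding part'_def by auto
  next
    obtain i0 where i0: "i0 < n" "u \<in> part i0" using un W by blast
    show "insert v W = (\<Union>i<n. part' i)"
    proof
      show "insert v W \<subseteq> (\<Union>i<n. part' i)" using un i0 unfolding part'_def by auto
      show "(\<Union>i<n. part' i) \<subseteq> insert v W" using ne unfolding part'_def by auto
    qed
  next
    fix i j assume ij: "i < n" "j < n" "i \<noteq> j"
    have "v \<notin> part i" "v \<notin> part j" using ne ij W by blast+
    moreover have "\<not> (u \<in> part i \<and> u \<in> part j)" using dj[OF ij] by blast
    ultimately show "part' i \<inter> part' j = {}" using dj[OF ij] unfolding part'_def by auto
  next
    fix i j x y assume ij: "i < n" "j < n" "GE i j" and xy: "x \<in> part' i" "y \<in> part' j"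
    have inj: "i \<noteq> j" using noGE ij by metis
    have vnot: "v \<notin> part i" "v \<notin> part j" using ne ij W by blast+
    have udj: "\<not> (u \<in> part i \<and> u \<in> part j)" using dj[OF ij(1,2) inj] by blast
    have pW: "part i \<subseteq> V" "part j \<subseteq> V" using ne ij W by blast+
    show "E x y"
    proof (cases "x = v")
      case True
      then have ui: "u \<in> part i" using xy vnot unfolding part'_def by (auto split: if_splits)
      then have yj: "y \<in> part j" using xy udj unfolding part'_def by (auto split: if_splits)
      have "E u y" using ed[OF ij ui yj] .
      moreover have "y \<noteq> u" "y \<noteq> v" using yj udj ui vnot by auto
      ultimately show ?thesis using md[of y] pW yj True by auto
    next
      case False
      then have xi: "x \<in> part i" using xy unfolding part'_def by (auto split: if_splits)
      show ?thesis
      proof (cases "y = v")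
        case True
        then have uj: "u \<in> part j" using xy vnot unfolding part'_def by (auto split: if_splits)
        have "E x u" using ed[OF ij xi uj] .
        moreover have "x \<noteq> u" using xi udj uj by auto
        ultimately show ?thesis using md2[of x] pW xi True False by auto
      next
        case False
        then have "y \<in> part j" using xy unfolding part'_def by (auto split: if_splits)
        then show ?thesis using ed[OF ij xi] by blast
      qed
    qed
  qed
qed

definition F1 :: "'a set \<Rightarrow> ('a \<Rightarrow> 'a \<Rightarrow> bool) \<Rightarrow> bool" where
  "F1 V E \<longleftrightarrow> (\<exists>n. odd n \<and> T_of_transitive V E n)"
definition F2 :: "'a set \<Rightarrow> ('a \<Rightarrow> 'a \<Rightarrow> bool) \<Rightarrow> bool" where
  "F2 V E \<longleftrightarrow> (\<exists>n. odd n \<and> subst_form V E 2 (\<lambda>i j. i < j)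
        (\<lambda>i S. if i = 0 then T_of_transitive S E n else transitive_tournament S E))"

lemma T_edge_irr: "\<not> T_edge n i i" unfolding T_edge_def by simp

lemma Tof_insert:
  assumes T: "tournament V E" and W: "W \<subseteq> V" "u \<in> W" "v \<in> V" "v \<notin> W" and uv: "E u v"
    and md: "\<And>w. w \<in> V \<Longrightarrow> w \<noteq> u \<Longrightarrow> w \<noteq> v \<Longrightarrow> (E u w \<longleftrightarrow> E v w)"
    and F: "T_of_transitive W E n"
  shows "T_of_transitive (insert v W) E n"
  using F unfolding T_of_transitive_def
proof (intro subst_insert[OF T W uv md T_edge_irr])
  show "subst_form W E n (T_edge n) (\<lambda>i S. transitive_tournament S E) \<Longrightarrow> subst_form W E n (T_edge n) (\<lambda>i S. transitive_tournament S E)" .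
  fix i S assume "transitive_tournament S E" "u \<in> S" "S \<subseteq> W"
  then show "transitive_tournament (insert v S) E"
    using tt_insert_twin[OF T _ _ W(3) _ uv md] W by blast
qed

lemma quadfree_sub: "quadfree V E \<Longrightarrow> W \<subseteq> V \<Longrightarrow> quadfree W E"
  unfolding quadfree_def by blast

lemma tt_single: "transitive_tournament {x} E"
  unfolding transitive_tournament_def
  by (rule exI[of _ "\<lambda>_. x"]) (auto simp: bij_betw_def lessThan_Suc)

lemma tt_append:
  assumes T: "tournament V E" and S: "S \<subseteq> V" "z \<in> V" "z \<notin> S" and sk: "\<And>w. w \<in> S \<Longrightarrow> E w z"
    and tt: "transitive_tournament S E"
  shows "transitive_tournament (insert z S) E"
proof -
  have trS: "etrans S E" using TT1[OF T S(1) tt] .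
  have "etrans (insert z S) E" unfolding etrans_def
  proof (intro ballI impI)
    fix x y w assume xyz: "x \<in> insert z S" "y \<in> insert z S" "w \<in> insert z S" "E x y" "E y w"
    have V3: "x \<in> V" "y \<in> V" "w \<in> V" using xyz S by auto
    have nz: "\<not> E z a" if "a \<in> insert z S" for a
      using that sk tour_anti[OF T] tour_irrefl[OF T] S by blast
    show "E x w"
    proof (cases "w = z")
      case True
      then show ?thesis using xyz nz sk by blast
    next
      case False
      then show ?thesis using xyz nz trS unfolding etrans_def by blast
    qed
  qed
  moreover have "insert z S \<subseteq> V" using S by blast
  ultimately show ?thesis using TT2[OF T] by blast
qed

lemma hard:
  assumes "tournament V E" "quadfree V E"
  shows "F1 V E \<or> F2 V E"
  using assms
proof (induction "card V" arbitrary: V rule: less_induct)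
  case less
  note T = less.prems(1) and Q = less.prems(2)
  have fin: "finite V" using tour_fin[OF T] .
  show ?case
  proof (cases "\<exists>z\<in>V. \<forall>w\<in>V. w \<noteq> z \<longrightarrow> E w z")
    case True
    then obtain z where z: "z \<in> V" "\<And>w. w \<in> V \<Longrightarrow> w \<noteq> z \<Longrightarrow> E w z" by blast
    define W where "W = V - {z}"
    have VW: "V = insert z W" "z \<notin> W" "W \<subseteq> V" using z unfolding W_def by auto
    have sk: "\<And>w. w \<in> W \<Longrightarrow> E w z" using z unfolding W_def by blast
    show ?thesis
    proof (cases "W = {}")
      case True
      then have Vz: "V = {z}" using VW by simp
      have "T_of_transitive V E 1" unfolding T_of_transitive_def subst_form_def Vz
        by (rule exI[of _ "\<lambda>i. {z}"]) (auto simp: T_edge_def tt_single)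
      then show ?thesis unfolding F1_def by (intro disjI1 exI[of _ 1]) simp
    next
      case False
      have TW: "tournament W E" using tour_sub[OF T VW(3) False] .
      have QW: "quadfree W E" using quadfree_sub[OF Q VW(3)] .
      have "card W < card V" unfolding W_def by (rule card_Diff1_less[OF fin z(1)])
      then have IH: "F1 W E \<or> F2 W E" using less.hyps TW QW by blast
      then show ?thesis
      proof
        assume "F1 W E"
        then obtain n where n: "odd n" "T_of_transitive W E n" unfolding F1_def by blast
        have "subst_form V E 2 (\<lambda>i j. i < j) (\<lambda>i S. if i = 0 then T_of_transitive S E n else transitive_tournament S E)"
          unfolding subst_form_def
        proof (rule exI[of _ "\<lambda>i. if i = 0 then W else {z}"], intro conjI allI impI ballI)
          fix i :: nat assume i: "i < 2"
          show "(if i = 0 then W else {z}) \<noteq> {}" using False by simp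
          show "(if i = 0 then W else {z}) \<subseteq> V" using VW by auto
          show "if i = 0 then T_of_transitive (if i = 0 then W else {z}) E n
                else transitive_tournament (if i = 0 then W else {z}) E" using n tt_single[of z E] by simp
        next
          show "V = (\<Union>i\<in>{..<2::nat}. if i = 0 then W else {z})" using VW by (auto simp: lessThan_def less_2_cases_iff)
        next
          fix i j :: nat assume "i < 2" "j < 2" "i \<noteq> j"
          then show "(if i = 0 then W else {z}) \<inter> (if j = 0 then W else {z}) = {}" using VW by (auto simp: less_2_cases_iff)
        next
          fix i j :: nat and x y assume "i < 2" "j < 2" "i < j" "x \<in> (if i = 0 then W else {z})" "y \<in> (if j = 0 then W else {z})"
          then show "E x y" using sk by (auto simp: less_2_cases_iff)
        qed
        then show ?thesis unfolding F2_def using n by blast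
      next
        assume "F2 W E"
        then obtain n where n: "odd n" and SF: "subst_form W E 2 (\<lambda>i j. i < j) (\<lambda>i S. if i = 0 then T_of_transitive S E n else transitive_tournament S E)"
          unfolding F2_def by blast
        obtain Q :: "nat \<Rightarrow> 'a set" where ne: "\<And>i. i<2 \<Longrightarrow> Q i \<noteq> {} \<and> Q i \<subseteq> W"
          and un: "W = (\<Union>i<2. Q i)"
          and dj: "\<And>i j. i<2 \<Longrightarrow> j<2 \<Longrightarrow> i \<noteq> j \<Longrightarrow> Q i \<inter> Q j = {}"
          and ed: "\<And>i j x y. i<2 \<Longrightarrow> j<2 \<Longrightarrow> i < j \<Longrightarrow> x\<in>Q i \<Longrightarrow> y\<in>Q j \<Longrightarrow> E x y"
          and P: "\<And>i. i<2 \<Longrightarrow> (if i = 0 then T_of_transitive (Q i) E n else transitive_tournament (Q i) E)"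
          by (rule subst_formE[OF SF]) blast
        have Q1: "transitive_tournament (Q 1) E" using P[of 1] by simp
        have Q1': "transitive_tournament (insert z (Q 1)) E"
          using tt_append[OF T _ z(1) _ _ Q1] ne[of 1] VW sk by auto
        have W01: "W = Q 0 \<union> Q 1" using un by (auto simp: lessThan_def less_2_cases_iff)
        define Q' where "Q' i = (if i = 0 then Q 0 else insert z (Q 1))" for i :: nat
        have "subst_form V E 2 (\<lambda>i j. i < j) (\<lambda>i S. if i = 0 then T_of_transitive S E n else transitive_tournament S E)"
          unfolding subst_form_def
        proof (rule exI[of _ Q'], intro conjI allI impI ballI)
          fix i :: nat assume i: "i < 2"
          show "Q' i \<noteq> {}" using ne[of 0] unfolding Q'_def by simp
          show "Q' i \<subseteq> V" using ne[of 0] ne[of 1] VW unfolding Q'_def by auto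
          show "if i = 0 then T_of_transitive (Q' i) E n else transitive_tournament (Q' i) E"
            using P[of 0] Q1' unfolding Q'_def by simp
        next
          show "V = (\<Union>i\<in>{..<2::nat}. Q' i)" using VW W01 unfolding Q'_def by (auto simp: lessThan_def less_2_cases_iff)
        next
          fix i j :: nat assume "i < 2" "j < 2" "i \<noteq> j"
          then show "Q' i \<inter> Q' j = {}" using dj[of 0 1] ne[of 0] VW unfolding Q'_def by (auto simp: less_2_cases_iff)
        next
          fix i j :: nat and x y assume a: "i < 2" "j < 2" "i < j" "x \<in> Q' i" "y \<in> Q' j"
          then have "i = 0" "j = 1" by auto
          then show "E x y" using a ed[of 0 1 x y] sk ne[of 0] unfolding Q'_def by auto
        qed
        then show ?thesis unfolding F2_def using n by blast
      qed
    qed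
  next
    case nosink: False
    show ?thesis
    proof (cases "\<exists>u\<in>V. \<exists>v\<in>V. E u v \<and> (\<forall>w\<in>V. w \<noteq> u \<longrightarrow> w \<noteq> v \<longrightarrow> (E u w \<longleftrightarrow> E v w))")
      case True
      then obtain u v where uv: "u \<in> V" "v \<in> V" "E u v" and md: "\<And>w. w \<in> V \<Longrightarrow> w \<noteq> u \<Longrightarrow> w \<noteq> v \<Longrightarrow> (E u w \<longleftrightarrow> E v w)"
        by blast
      have unv: "u \<noteq> v" using uv tour_irrefl[OF T] by blast
      define W where "W = V - {v}"
      have VW: "V = insert v W" "v \<notin> W" "W \<subseteq> V" "u \<in> W" using uv unv unfolding W_def by auto
      have TW: "tournament W E" using tour_sub[OF T VW(3)] VW(4) by blast
      have QW: "quadfree W E" using quadfree_sub[OF Q VW(3)] .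
      have "card W < card V" unfolding W_def by (rule card_Diff1_less[OF fin uv(2)])
      then have IH: "F1 W E \<or> F2 W E" using less.hyps TW QW by blast
      then show ?thesis
      proof
        assume "F1 W E"
        then obtain n where n: "odd n" "T_of_transitive W E n" unfolding F1_def by blast
        have "T_of_transitive V E n" using Tof_insert[OF T VW(3,4) uv(2) VW(2) uv(3) md n(2)] VW(1) by simp
        then show ?thesis unfolding F1_def using n by blast
      next
        assume "F2 W E"
        then obtain n where n: "odd n" and SF: "subst_form W E 2 (\<lambda>i j. i < j) (\<lambda>i S. if i = 0 then T_of_transitive S E n else transitive_tournament S E)"
          unfolding F2_def by blast
        have "subst_form (insert v W) E 2 (\<lambda>i j. i < j) (\<lambda>i S. if i = 0 then T_of_transitive S E n else transitive_tournament S E)"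
        proof (rule subst_insert[OF T VW(3,4) uv(2) VW(2) uv(3) md _ SF])
          show "\<And>i::nat. \<not> i < i" by simp
          fix i S assume i: "i < (2::nat)" and PS: "if i = 0 then T_of_transitive S E n else transitive_tournament S E"
            and uS: "u \<in> S" and SW: "S \<subseteq> W"
          show "if i = 0 then T_of_transitive (insert v S) E n else transitive_tournament (insert v S) E"
          proof (cases "i = 0")
            case True
            then have "T_of_transitive S E n" using PS by simp
            then have "T_of_transitive (insert v S) E n"
              using Tof_insert[OF T _ uS uv(2) _ uv(3) md] SW VW by blast
            then show ?thesis using True by simp
          next
            case False
            then have "transitive_tournament S E" using PS by simp
            then have "transitive_tournament (insert v S) E"
              using tt_insert_twin[OF T _ uS uv(2) _ uv(3) md] SW VW by blast
            then show ?thesis using False by simp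
          qed
        qed
        then show ?thesis unfolding F2_def using n VW(1) by blast
      qed
    next
      case npm: False
      have "C3 V E"
      proof
        show "tournament V E" by (rule T)
        show "quadfree V E" by (rule Q)
        fix z assume z: "z \<in> V"
        then obtain w where "w \<in> V" "w \<noteq> z" "\<not> E w z" using nosink by blast
        then show "\<exists>w\<in>V. E z w" using tour_total[OF T] z by blast
      next
        fix u v assume "u \<in> V" "v \<in> V" "E u v"
        then show "\<exists>w\<in>V. w \<noteq> u \<and> w \<noteq> v \<and> (E u w \<noteq> E v w)" using npm by blast
      qed
      then show ?thesis using C3.main3 unfolding F1_def by blast
    qed
  qed
qed

theorem corollary3p9:
  fixes V :: "'a set" and E :: "'a \<Rightarrow> 'a \<Rightarrow> bool"
  assumes "tournament V E"
  shows "\<not> has_D4 V E \<longleftrightarrow>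
    (\<exists>n. odd n \<and> T_of_transitive V E n) \<or>
    (\<exists>n. odd n \<and> subst_form V E 2 (\<lambda>i j. i < j)
        (\<lambda>i S. if i = 0 then T_of_transitive S E n else transitive_tournament S E))"
proof
  assume "\<not> has_D4 V E"
  then have "quadfree V E" using has_D4_iff[OF assms] by simp
  then show "(\<exists>n. odd n \<and> T_of_transitive V E n) \<or>
    (\<exists>n. odd n \<and> subst_form V E 2 (\<lambda>i j. i < j)
        (\<lambda>i S. if i = 0 then T_of_transitive S E n else transitive_tournament S E))"
    using hard[OF assms] unfolding F1_def F2_def by blast
next
  assume "(\<exists>n. odd n \<and> T_of_transitive V E n) \<or>
    (\<exists>n. odd n \<and> subst_form V E 2 (\<lambda>i j. i < j)
        (\<lambda>i S. if i = 0 then T_of_transitive S E n else transitive_tournament S E))"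
  then have "quadfree V E" using T_quadfree[OF assms] F2_quadfree[OF assms] by blast
  then show "\<not> has_D4 V E" using has_D4_iff[OF assms] by simp
qed

end
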